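(* Let $u=u_1\cdots u_k$ be a nondecreasing word of length $k\ge1$ with letters in $\{1,\dots,r\}$, and let $I=(i_1,\dots,i_r)$ be a composition of length $r$ of an integer $n\ge k$. Then there exists at most one nondecreasing word $v$ with letters in $\{1,\dots,r\}$ such that $uv$ is packed and $\mathrm{WC}(uv)=I$, and such a $v$ exists if and only if $u_i<u_{i+1}$ for every $i\in\mathrm{Des}(I)$ with $i\le k-1$. In that case, writing $y=y_1y_2\cdots y_n=1^{i_1}2^{i_2}\cdots r^{i_r}$, \[ \mathrm{sinv}(uv)=\sum_{i=1}^k(u_i-y_i)=\sum_{i=1}^k u_i-\bigl(k+\mathrm{maj}(\bar K)\bigr), \] where $K$ is the composition of $k$ with $\mathrm{Des}(K)=\mathrm{Des}(I)\cap[1,k-1]$.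
   Context: A composition $I=(i_1,\dots,i_r)$ of $n$ has $\mathrm{Des}(I)=\{i_1,\dots,i_1+\dots+i_{r-1}\}$; $\bar K$ is the reverse of $K$; for $K=(k_1,\dots,k_s)$, $\mathrm{maj}(K)=\sum_{t=1}^s(s-t)k_t$. $a^{b}$ denotes the letter $a$ repeated $b$ times. A packed word is a word whose set of letters is $\{1,\dots,m\}$ for some $m$. For a packed word $w=w_1\cdots w_n$: $\mathrm{WC}(w)$ is the composition of $n$ whose descent set is the set of positions $p<n$ such that $w_p$ does not occur in $w_{p+1}\cdots w_n$; $\mathrm{sinv}(w)$ is the number of pairs $i<j$ with $w_i>w_j$ and $w_j$ not occurring in $w_{j+1}\cdots w_n$. *)

theory Defs
  imports Main
begin

text \<open>Words are lists of positive naturals; positions are 1-indexed in the paper,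
  0-indexed in lists.\<close>

definition packed :: "nat list \<Rightarrow> bool" where
  "packed w \<longleftrightarrow> (\<exists>m. set w = {1..m})"

definition is_composition :: "nat list \<Rightarrow> nat \<Rightarrow> bool" where
  "is_composition I n \<longleftrightarrow> (\<forall>x\<in>set I. x > 0) \<and> sum_list I = n"

definition Des :: "nat list \<Rightarrow> nat set" where
  "Des I = {sum_list (take j I) | j. 1 \<le> j \<and> j < length I}"

text \<open>The composition of n (n >= 1) whose descent set is D (a subset of {1..n-1}).\<close>
definition comp_of_des :: "nat \<Rightarrow> nat set \<Rightarrow> nat list" where
  "comp_of_des n D =
     (let ps = 0 # sorted_list_of_set (D \<inter> {1..<n}) @ [n]
      in map (\<lambda>i. ps ! (Suc i) - ps ! i) [0..<length ps - 1])"

definition WC :: "nat list \<Rightarrow> nat list" where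
  "WC w = comp_of_des (length w)
            {p. 1 \<le> p \<and> p < length w \<and> w ! (p - 1) \<notin> set (drop p w)}"

definition sinv :: "nat list \<Rightarrow> nat" where
  "sinv w = card {(i, j). i < j \<and> j < length w \<and> w ! i > w ! j
                          \<and> w ! j \<notin> set (drop (Suc j) w)}"

definition maj :: "nat list \<Rightarrow> nat" where
  "maj K = (\<Sum>t<length K. (length K - 1 - t) * K ! t)"

definition ywords :: "nat list \<Rightarrow> nat list" where
  "ywords I = concat (map (\<lambda>j. replicate (I ! j) (Suc j)) [0..<length I])"

end

theory Submission
  imports Defs
begin


abbreviation pos :: "nat list \<Rightarrow> bool" where "pos I \<equiv> (\<forall>x\<in>set I. x > 0)"

lemma sum_take_strict:
  assumes "pos I" "j < j'" "j' \<le> length I"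
  shows "sum_list (take j I) < sum_list (take j' I)"
proof -
  have e: "take j' I = take j I @ take (j'-j) (drop j I)"
    using assms by (metis le_add_diff_inverse less_imp_le take_add)
  have "take (j'-j) (drop j I) \<noteq> []" using assms by simp
  then obtain x where x: "x \<in> set (take (j'-j) (drop j I))" by (meson list.set_sel(1))
  then have "x > 0" using assms by (meson in_set_dropD in_set_takeD)
  moreover have "x \<le> sum_list (take (j'-j) (drop j I))" using x member_le_sum_list by blast
  ultimately show ?thesis by (subst e) simp
qed

lemma sum_take_le_sum: "sum_list (take j I) \<le> sum_list (I::nat list)"
  by (metis append_take_drop_id le_add1 sum_list_append)

lemma Des_eq: "Des I = (\<lambda>j. sum_list (take j I)) ` {1..<length I}"
  unfolding Des_def by auto

lemma card_Des: assumes "pos I" shows "card (Des I) = length I - 1"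
proof -
  have "inj_on (\<lambda>j. sum_list (take j I)) {1..<length I}"
  proof (rule inj_onI)
    fix a b assume "a \<in> {1..<length I}" "b \<in> {1..<length I}" and e: "sum_list (take a I) = sum_list (take b I)"
    then show "a = b" using sum_take_strict[OF assms, of a b] sum_take_strict[OF assms, of b a]
      by (metis atLeastLessThan_iff less_imp_le_nat linorder_neqE_nat nat_less_le)
  qed
  then show ?thesis by (simp add: Des_eq card_image)
qed

lemma Des_sub: assumes "pos I" shows "Des I \<subseteq> {1..<sum_list I}"
proof
  fix d assume "d \<in> Des I"
  then obtain j where j: "1 \<le> j" "j < length I" "d = sum_list (take j I)" unfolding Des_def by auto
  have "sum_list (take 0 I) < d" using sum_take_strict[OF assms, of 0 j] j by simp
  moreover have "d < sum_list (take (length I) I)" using sum_take_strict[OF assms, of j "length I"] j by simp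
  ultimately show "d \<in> {1..<sum_list I}" by simp
qed

lemma tele:
  fixes ps :: "nat list"
  assumes "sorted ps" "j < length ps"
  shows "sum_list (take j (map (\<lambda>i. ps!(Suc i) - ps!i) [0..<length ps - 1])) = ps!j - ps!0"
  using assms(2)
proof (induction j)
  case 0 then show ?case by simp
next
  case (Suc j)
  have "ps!j \<le> ps!(Suc j)" "ps!0 \<le> ps!j" using assms(1) Suc.prems by (auto simp: sorted_iff_nth_mono)
  moreover have "take (Suc j) (map (\<lambda>i. ps!(Suc i) - ps!i) [0..<length ps - 1])
     = take j (map (\<lambda>i. ps!(Suc i) - ps!i) [0..<length ps - 1]) @ [ps!(Suc j) - ps!j]"
    using Suc.prems by (simp add: take_Suc_conv_app_nth del: upt_Suc) (metis One_nat_def Suc_lessE diff_Suc_1 less_SucI nth_upt plus_nat.add_0)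
  ultimately show ?case using Suc by simp
qed

lemma sls_set: "sorted_wrt (<) xs \<Longrightarrow> sorted_list_of_set (set xs) = (xs::nat list)"
  by (simp add: sorted_list_of_set_sort_remdups distinct_remdups_id strict_sorted_iff sorted_sort_id)

lemma comp_of_des_props:
  assumes "D \<subseteq> {1..<n}" "n \<ge> 1"
  shows "sum_list (comp_of_des n D) = n" "Des (comp_of_des n D) = D" "pos (comp_of_des n D)"
    "length (comp_of_des n D) = card D + 1"
proof -
  have fD: "finite D" using assms finite_subset by blast
  define xs where "xs = sorted_list_of_set D"
  define ps where "ps = 0 # xs @ [n]"
  have DD: "D \<inter> {1..<n} = D" using assms by auto
  have c: "comp_of_des n D = map (\<lambda>i. ps!(Suc i) - ps!i) [0..<length ps - 1]"
    unfolding comp_of_des_def ps_def xs_def DD Let_def by simp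
  have sx: "sorted_wrt (<) xs" "set xs = D" using fD by (auto simp: xs_def)
  have sps: "sorted_wrt (<) ps" unfolding ps_def using sx assms
    by (auto simp: sorted_wrt_append)
  then have sps': "sorted ps" by (simp add: strict_sorted_iff)
  have lps: "length ps = length xs + 2" by (simp add: ps_def)
  have lx: "length xs = card D" using fD by (simp add: xs_def)
  show "length (comp_of_des n D) = card D + 1" using c lps lx by simp
  have "sum_list (comp_of_des n D) = sum_list (take (length ps - 1) (comp_of_des n D))" using c by simp
  also have "\<dots> = ps!(length ps - 1) - ps!0" unfolding c by (rule tele[OF sps']) (simp add: lps)
  also have "\<dots> = n" by (simp add: ps_def nth_append lps)
  finally show "sum_list (comp_of_des n D) = n" .
  show "pos (comp_of_des n D)"
    using sorted_wrt_nth_less[OF sps] by (auto simp: c lps)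
  have "Des (comp_of_des n D) = {sum_list (take j (comp_of_des n D)) |j. 1 \<le> j \<and> j < length xs + 1}"
    unfolding Des_def using c lps by simp
  also have "\<dots> = {ps ! j |j. 1 \<le> j \<and> j < length xs + 1}"
  proof -
    have hps: "\<forall>j<length ps. sum_list (take j (comp_of_des n D)) = ps!j"
      using tele[OF sps'] by (simp add: c ps_def)
    have "j < length xs + 1 \<Longrightarrow> sum_list (take j (comp_of_des n D)) = ps!j" for j
      using hps lps by simp
    then show ?thesis by (intro Collect_cong iffI; elim exE conjE; intro exI conjI; simp)
  qed
  also have "\<dots> = {xs ! j |j. j < length xs}"
  proof -
    have e: "ps ! Suc j = xs ! j" if "j < length xs" for j using that by (simp add: ps_def nth_append)
    show ?thesis
    proof (intro Collect_cong iffI; elim exE conjE)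
      fix x j assume "x = ps ! j" "1 \<le> j" "j < length xs + 1"
      then show "\<exists>j. x = xs ! j \<and> j < length xs" using e[of "j - 1"] by (intro exI[of _ "j - 1"]) auto
    next
      fix x j assume "x = xs ! j" "j < length xs"
      then show "\<exists>j. x = ps ! j \<and> 1 \<le> j \<and> j < length xs + 1" using e[of j] by (intro exI[of _ "Suc j"]) auto
    qed
  qed
  also have "\<dots> = D" using sx by (auto simp: in_set_conv_nth)
  finally show "Des (comp_of_des n D) = D" .
qed

lemma comp_of_des_Des:
  assumes "is_composition I n" "n \<ge> 1"
  shows "comp_of_des n (Des I) = I"
proof -
  have p: "pos I" and s: "sum_list I = n" using assms by (auto simp: is_composition_def)
  define P where "P j = sum_list (take j I)" for j
  have m: "length I \<ge> 1" using s assms by (cases I) auto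
  have DD: "Des I \<inter> {1..<n} = Des I" using Des_sub[OF p] s by auto
  have sm: "sorted_wrt (<) (map P [1..<length I])"
    unfolding sorted_wrt_map by (auto simp: sorted_wrt_iff_nth_less P_def intro!: sum_take_strict[OF p])
  have "Des I = set (map P [1..<length I])" by (auto simp: Des_eq P_def)
  then have sl: "sorted_list_of_set (Des I) = map P [1..<length I]" using sls_set[OF sm] by simp
  have "0 # map P [1..<length I] @ [n] = map P [0..<Suc (length I)]"
    using m s by (simp add: P_def upt_conv_Cons del: upt_Suc) (simp add: upt_Suc P_def)
  then have ps: "0 # sorted_list_of_set (Des I \<inter> {1..<n}) @ [n] = map P [0..<Suc (length I)]"
    using DD sl by simp
  show ?thesis unfolding comp_of_des_def ps Let_def
  proof (rule nth_equalityI)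
    fix i assume "i < length (map (\<lambda>i. map P [0..<Suc (length I)] ! Suc i - map P [0..<Suc (length I)] ! i)
         [0..<length (map P [0..<Suc (length I)]) - 1])"
    then have i: "i < length I" by simp
    have "P (Suc i) = P i + I!i" using i by (simp add: P_def take_Suc_conv_app_nth)
    then show "map (\<lambda>i. map P [0..<Suc (length I)] ! Suc i - map P [0..<Suc (length I)] ! i)
         [0..<length (map P [0..<Suc (length I)]) - 1] ! i = I ! i"
      using i by (simp del: upt_Suc add: nth_map_upt)
  qed simp
qed

lemma ywords_snoc: "ywords (I @ [x]) = ywords I @ replicate x (Suc (length I))"
proof -
  have "map (\<lambda>j. replicate ((I @ [x]) ! j) (Suc j)) [0..<length I]
      = map (\<lambda>j. replicate (I ! j) (Suc j)) [0..<length I]"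
    (is "?a = ?b") by (intro map_cong) (auto simp: nth_append)
  have "ywords (I @ [x]) = concat ?a @ replicate x (Suc (length I))" by (simp add: ywords_def)
  also have "\<dots> = concat ?b @ replicate x (Suc (length I))" by (simp only: \<open>?a = ?b\<close>)
  finally show ?thesis by (simp add: ywords_def)
qed

lemma length_ywords: "length (ywords I) = sum_list I"
  by (induction I rule: rev_induct) (simp_all add: ywords_snoc, simp add: ywords_def)

lemma Des_snoc: "Des (I @ [x]) = (if I = [] then {} else insert (sum_list I) (Des I))"
proof -
  have "Des (I @ [x]) = (\<lambda>j. sum_list (take j I)) ` {1..<Suc (length I)}"
    unfolding Des_eq by (intro image_cong) auto
  also have "\<dots> = (if I = [] then {} else insert (sum_list I) (Des I))"
    by (cases "I = []") (auto simp: Des_eq atLeastLessThanSuc Suc_le_eq)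
  finally show ?thesis .
qed

lemma ywords_nth:
  assumes "pos I" "i < sum_list I"
  shows "ywords I ! i = Suc (card {d\<in>Des I. d \<le> i})"
  using assms
proof (induction I arbitrary: i rule: rev_induct)
  case Nil then show ?case by simp
next
  case (snoc x I)
  have pI: "pos I" and px: "x > 0" using snoc.prems by auto
  show ?case
  proof (cases "i < sum_list I")
    case True
    then have "I \<noteq> []" by auto
    then have "{d\<in>Des (I@[x]). d \<le> i} = {d\<in>Des I. d \<le> i}" using True by (auto simp: Des_snoc)
    then show ?thesis using snoc.IH[OF pI True] True by (simp add: ywords_snoc nth_append length_ywords)
  next
    case False
    have sub: "Des (I @ [x]) \<subseteq> {1..<sum_list (I @ [x])}" using Des_sub snoc.prems(1) by blast
    have "Des (I@[x]) \<subseteq> {..i}" using Des_sub[OF pI] False by (auto simp: Des_snoc split: if_splits)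
    then have "{d\<in>Des (I@[x]). d \<le> i} = Des (I@[x])" by auto
    then have "card {d\<in>Des (I@[x]). d \<le> i} = length I" using card_Des[OF snoc.prems(1)] by simp
    then show ?thesis using False snoc.prems by (simp add: ywords_snoc nth_append length_ywords)
  qed
qed

lemma sum_list_concat': "sum_list (concat xss) = sum_list (map sum_list (xss::nat list list))"
  by (induction xss) auto

lemma sum_ywords: "sum_list (ywords K) = sum_list K + maj (rev K)"
proof -
  have "sum_list (ywords K) = (\<Sum>j<length K. K!j * Suc j)"
  proof -
    have "sum_list (ywords K) = sum_list (map (\<lambda>j. K!j * Suc j) [0..<length K])"
      by (simp add: ywords_def sum_list_concat' comp_def sum_list_replicate)
    also have "\<dots> = (\<Sum>j\<in>set [0..<length K]. K!j * Suc j)"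
      by (rule sum_set_upt_conv_sum_list_nat[symmetric])
    finally show ?thesis by (simp add: atLeast0LessThan)
  qed
  also have "\<dots> = (\<Sum>j<length K. K!j) + (\<Sum>j<length K. j * K!j)"
    by (simp add: sum.distrib[symmetric] algebra_simps)
  also have "(\<Sum>j<length K. K!j) = sum_list K" by (simp add: sum_list_sum_nth atLeast0LessThan)
  also have "(\<Sum>j<length K. j * K!j) = maj (rev K)"
  proof -
    have "maj (rev K) = (\<Sum>t<length K. (length K - 1 - t) * K ! (length K - Suc t))"
      unfolding maj_def by (intro sum.cong) (auto simp: rev_nth)
    also have "\<dots> = (\<Sum>t<length K. (\<lambda>j. j * K!j) (length K - Suc t))"
      by (intro sum.cong) auto
    also have "\<dots> = (\<Sum>j<length K. j * K!j)" by (rule sum.nat_diff_reindex)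
    finally show ?thesis by simp
  qed
  finally show ?thesis .
qed



definition lastp :: "nat list \<Rightarrow> nat \<Rightarrow> bool" where
  "lastp w q \<longleftrightarrow> w!q \<notin> set (drop (Suc q) w)"

definition Sset :: "nat list \<Rightarrow> nat set" where
  "Sset w = {p. 1 \<le> p \<and> p < length w \<and> w ! (p - 1) \<notin> set (drop p w)}"

lemma WC_Sset: "WC w = comp_of_des (length w) (Sset w)" by (simp add: WC_def Sset_def)

lemma Sset_sub: "Sset w \<subseteq> {1..<length w}" by (auto simp: Sset_def)

lemma Suc_in_Sset: "Suc q \<in> Sset w \<longleftrightarrow> Suc q < length w \<and> lastp w q"
  by (simp add: Sset_def lastp_def)

lemma in_drop_nth: "a \<in> set (drop m w) \<longleftrightarrow> (\<exists>t. m \<le> t \<and> t < length w \<and> w!t = a)"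
proof
  assume "a \<in> set (drop m w)"
  then obtain i where "i < length (drop m w)" "drop m w ! i = a" by (auto simp: in_set_conv_nth)
  then show "\<exists>t. m \<le> t \<and> t < length w \<and> w!t = a" by (intro exI[of _ "m + i"]) auto
next
  assume "\<exists>t. m \<le> t \<and> t < length w \<and> w!t = a"
  then obtain t where "m \<le> t" "t < length w" "w!t = a" by blast
  then show "a \<in> set (drop m w)" unfolding in_set_conv_nth
    by (intro exI[of _ "t - m"]) auto
qed

lemma lastp_iff: "lastp w q \<longleftrightarrow> (\<forall>t. q < t \<and> t < length w \<longrightarrow> w!t \<noteq> w!q)"
  unfolding lastp_def in_drop_nth by (auto simp: Suc_le_eq)

lemma lastp_bij: "bij_betw (\<lambda>q. w!q) {q. q < length w \<and> lastp w q} (set w)"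
proof (rule bij_betwI')
  fix x y assume x: "x \<in> {q. q < length w \<and> lastp w q}" and y: "y \<in> {q. q < length w \<and> lastp w q}"
  show "(w ! x = w ! y) = (x = y)"
  proof
    assume e: "w ! x = w ! y"
    show "x = y"
    proof (rule ccontr)
      assume "x \<noteq> y"
      then consider "x < y" | "y < x" by linarith
      then show False using x y e by cases (auto simp: lastp_iff)
    qed
  qed simp
next
  fix x assume "x \<in> {q. q < length w \<and> lastp w q}" then show "w ! x \<in> set w" by simp
next
  fix a assume "a \<in> set w"
  define A where "A = {p. p < length w \<and> w!p = a}"
  have fA: "finite A" and nA: "A \<noteq> {}" using \<open>a \<in> set w\<close> by (auto simp: A_def in_set_conv_nth)
  define p where "p = Max A"
  have pA: "p \<in> A" using fA nA by (simp add: p_def)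
  have "lastp w p" unfolding lastp_iff
  proof (intro allI impI)
    fix t assume t: "p < t \<and> t < length w"
    show "w!t \<noteq> w!p"
    proof
      assume "w!t = w!p"
      then have "t \<in> A" using t pA by (auto simp: A_def)
      then show False using Max_ge[OF fA, of t] t by (simp add: p_def)
    qed
  qed
  then show "\<exists>x\<in>{q. q < length w \<and> lastp w q}. a = w ! x" using pA by (auto simp: A_def)
qed

lemma card_Sset: assumes "w \<noteq> []" shows "card (Sset w) = card (set w) - 1"
proof -
  let ?L = "{q. q < length w \<and> lastp w q}"
  have "Sset w = Suc ` (?L - {length w - 1})"
  proof (rule set_eqI)
    fix p show "p \<in> Sset w \<longleftrightarrow> p \<in> Suc ` (?L - {length w - 1})"
      using assms by (cases p) (auto simp: Suc_in_Sset Sset_def lastp_def image_iff)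
  qed
  moreover have "length w - 1 \<in> ?L" using assms by (simp add: lastp_def)
  moreover have "card ?L = card (set w)" using bij_betw_same_card[OF lastp_bij] .
  ultimately show ?thesis by (simp add: card_image)
qed

lemma WC_iff:
  assumes "is_composition I n" "n \<ge> 1" "w \<noteq> []"
  shows "WC w = I \<longleftrightarrow> length w = n \<and> Sset w = Des I"
proof
  assume h: "WC w = I"
  have l: "length w \<ge> 1" using assms by (cases w) auto
  have "sum_list (WC w) = length w" "Des (WC w) = Sset w"
    using comp_of_des_props[OF Sset_sub l] by (simp_all add: WC_Sset)
  then show "length w = n \<and> Sset w = Des I" using h assms by (auto simp: is_composition_def)
next
  assume "length w = n \<and> Sset w = Des I"
  then show "WC w = I" using comp_of_des_Des[OF assms(1,2)] by (simp add: WC_Sset)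
qed

lemma uniq_core:
  assumes "length w1 = length w2" "Sset w1 = Sset w2" "q < length w1" "\<forall>i<q. w1!i = w2!i"
    "w1!q < w2!q" "\<forall>i. q \<le> i \<and> i < length w2 \<longrightarrow> w2!q \<le> w2!i" "w1!q \<in> set w2"
  shows False
proof -
  define a where "a = w1!q"
  define A where "A = {p. p < length w2 \<and> w2!p = a}"
  have fA: "finite A" and nA: "A \<noteq> {}" using assms(7) by (auto simp: A_def a_def in_set_conv_nth)
  define p where "p = Max A"
  have pA: "p \<in> A" using fA nA by (simp add: p_def)
  have pq: "p < q"
  proof (rule ccontr)
    assume "\<not> p < q"
    then have "w2!q \<le> w2!p" using assms(6) pA by (auto simp: A_def)
    then show False using pA assms(5) by (auto simp: A_def a_def)
  qed
  have "lastp w2 p" unfolding lastp_iff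
  proof (intro allI impI)
    fix t assume t: "p < t \<and> t < length w2"
    show "w2!t \<noteq> w2!p"
    proof
      assume "w2!t = w2!p"
      then have "t \<in> A" using t pA by (auto simp: A_def)
      then show False using Max_ge[OF fA, of t] t by (simp add: p_def)
    qed
  qed
  then have "Suc p \<in> Sset w2" using pq assms(1,3) by (simp add: Suc_in_Sset)
  then have "Suc p \<in> Sset w1" using assms(2) by simp
  then have "lastp w1 p" by (simp add: Suc_in_Sset)
  moreover have "w1!p = a" using pA pq assms(4) by (auto simp: A_def)
  ultimately show False using pq assms(3) by (auto simp: lastp_iff a_def)
qed

lemma uniq_core2:
  assumes "length v1 = length v2" "Sset (u@v1) = Sset (u@v2)" "set (u@v1) = set (u@v2)" "sorted v2"
    "j < length v1" "\<forall>i<j. v1!i = v2!i" "v1!j < v2!j"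
  shows False
proof (rule uniq_core[of "u@v1" "u@v2" "length u + j"])
  show "\<forall>i<length u + j. (u @ v1) ! i = (u @ v2) ! i"
    using assms(6) by (auto simp: nth_append)
  show "\<forall>i. length u + j \<le> i \<and> i < length (u @ v2) \<longrightarrow> (u @ v2) ! (length u + j) \<le> (u @ v2) ! i"
    using assms(4) by (auto simp: nth_append sorted_iff_nth_mono)
  show "(u @ v1) ! (length u + j) \<in> set (u @ v2)" using assms(3,5)
    by (metis length_append nat_add_left_cancel_less nth_mem)
qed (use assms in auto)

lemma uniq:
  assumes "length v1 = length v2" "Sset (u@v1) = Sset (u@v2)" "set (u@v1) = set (u@v2)" "sorted v1" "sorted v2"
  shows "v1 = v2"
proof (rule ccontr)
  assume "v1 \<noteq> v2"
  then have "\<exists>j. j < length v1 \<and> v1!j \<noteq> v2!j" using assms(1) nth_equalityI by blast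
  then obtain j where j: "j < length v1" "v1!j \<noteq> v2!j" and m: "\<forall>i<j. \<not>(i < length v1 \<and> v1!i \<noteq> v2!i)"
    using exists_least_iff[of "\<lambda>j. j < length v1 \<and> v1!j \<noteq> v2!j"] by blast
  have m': "\<forall>i<j. v1!i = v2!i" using m j by auto
  consider "v1!j < v2!j" | "v2!j < v1!j" using j by linarith
  then show False
  proof cases
    case 1 then show ?thesis using uniq_core2[OF assms(1,2,3,5) j(1) m'] by blast
  next
    case 2 then show ?thesis using uniq_core2[of v2 v1 u j] assms j m' by auto
  qed
qed



lemma cnt_surj:
  fixes cnt :: "nat \<Rightarrow> nat"
  assumes "cnt 0 = 0" "\<And>j. cnt (Suc j) \<le> Suc (cnt j)"
  shows "t < cnt m \<Longrightarrow> \<exists>j<m. cnt j = t"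
proof (induction m)
  case 0 then show ?case using assms by simp
next
  case (Suc m)
  show ?case
  proof (cases "t < cnt m")
    case True then show ?thesis using Suc.IH by (meson less_SucI)
  next
    case False then have "t = cnt m" using Suc.prems assms(2)[of m] by linarith
    then show ?thesis by blast
  qed
qed

lemma exist:
  assumes u: "length u = k" "k \<ge> 1" "sorted u" "set u \<subseteq> {1..r}"
    and D: "D \<subseteq> {1..<n}" "card D = r - 1" "n \<ge> k" "r \<ge> 1"
    and cond: "\<forall>i\<in>D. i \<le> k-1 \<longrightarrow> u!(i-1) < u!i"
  shows "\<exists>v. sorted v \<and> set v \<subseteq> {1..r} \<and> set (u@v) = {1..r} \<and> length (u@v) = n \<and> Sset (u@v) = D"
proof -
  have fD: "finite D" using D(1) finite_subset by blast
  define E where "E = {q. q < n \<and> (Suc q \<in> D \<or> q = n - 1)}"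
  have fE: "finite E" by (simp add: E_def)
  have us: "u!i \<le> u!j" if "i \<le> j" "j < k" for i j using u(1,3) that by (simp add: sorted_iff_nth_mono)
  have BE: "u!q < u!(Suc q)" if "q \<in> E" "Suc q < k" for q
  proof -
    have "Suc q \<in> D" using that D(3) by (auto simp: E_def)
    then show ?thesis using cond that by fastforce
  qed
  have BE2: "u!q < u!t" if "q \<in> E" "q < t" "t < k" for q t
    using BE[OF that(1)] us[of "Suc q" t] that by fastforce
  define U where "U = (\<lambda>q. u!q) ` {q\<in>E. q < k}"
  have injU: "inj_on (\<lambda>q. u!q) {q\<in>E. q < k}"
  proof (rule inj_onI)
    fix x y assume x: "x \<in> {q\<in>E. q < k}" and y: "y \<in> {q\<in>E. q < k}" and e: "u!x = u!y"
    show "x = y"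
    proof (rule ccontr)
      assume "x \<noteq> y" then consider "x < y" | "y < x" by linarith
      then show False using BE2 x y e by cases fastforce+
    qed
  qed
  have cU: "card U = card {q\<in>E. q < k}" unfolding U_def using injU by (simp add: card_image)
  have Uu: "U \<subseteq> set u" using u(1) by (auto simp: U_def)
  have Ur: "U \<subseteq> {1..r}" using Uu u(4) by blast
  have nD: "n \<notin> D" using D(1) by auto
  have Eim: "E = (\<lambda>d. d - 1) ` insert n D"
  proof (rule set_eqI)
    fix q show "q \<in> E \<longleftrightarrow> q \<in> (\<lambda>d. d - 1) ` insert n D"
    proof
      assume "q \<in> E"
      then consider "Suc q \<in> D" | "q = n - 1" by (auto simp: E_def)
      then show "q \<in> (\<lambda>d. d - 1) ` insert n D"
        by cases (force, auto)
    next
      assume "q \<in> (\<lambda>d. d - 1) ` insert n D"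
      then obtain d where d: "d \<in> insert n D" "q = d - 1" by blast
      show "q \<in> E"
      proof (cases "d = n")
        case True then show ?thesis using d D(3) u(2) by (auto simp: E_def)
      next
        case False
        then have "d \<in> D" using d by auto
        moreover then have "1 \<le> d" "d < n" using D(1) by auto
        ultimately show ?thesis using d by (auto simp: E_def)
      qed
    qed
  qed
  have posD: "\<forall>d\<in>insert n D. d \<ge> 1" using D(1) D(3) u(2) by auto
  have "inj_on (\<lambda>d. d - 1) (insert n D)"
  proof (rule inj_onI)
    fix x y assume "x \<in> insert n D" "y \<in> insert n D" "x - 1 = y - 1"
    then show "x = y" using posD by (metis Suc_pred' less_eq_Suc_le One_nat_def)
  qed
  then have cE: "card E = r" using Eim fD nD D(2) D(4) by (simp add: card_image)
  define C where "C = {1..r} - U"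
  define cs where "cs = sorted_list_of_set C"
  have fC: "finite C" by (simp add: C_def)
  have lcs: "length cs = r - card U" using Ur by (simp add: cs_def C_def card_Diff_subset finite_subset)
  have scs: "sorted_wrt (<) cs" "set cs = C" using fC by (auto simp: cs_def)
  define cnt where "cnt j = card {q\<in>E. k \<le> q \<and> q < k + j}" for j
  have cnt_mono: "cnt i \<le> cnt j" if "i \<le> j" for i j
    unfolding cnt_def using that fE by (intro card_mono) auto
  have cnt_Suc: "cnt (Suc j) = cnt j + (if k + j \<in> E then 1 else 0)" for j
  proof -
    have "{q\<in>E. k \<le> q \<and> q < k + Suc j} = {q\<in>E. k \<le> q \<and> q < k + j} \<union> (if k + j \<in> E then {k+j} else {})"
      by (cases "k + j \<in> E") (auto simp: less_Suc_eq)
    then show ?thesis using fE unfolding cnt_def by (auto simp: card_insert_if)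
  qed
  have cnt0: "cnt 0 = 0" by (simp add: cnt_def)
  have Ek: "{q\<in>E. k \<le> q} = E - {q\<in>E. q < k}" by auto
  have cntn: "cnt (n - k) = length cs"
  proof -
    have "{q\<in>E. k \<le> q \<and> q < k + (n - k)} = {q\<in>E. k \<le> q}" using D(3) by (auto simp: E_def)
    then have "cnt (n - k) = card E - card {q\<in>E. q < k}" unfolding cnt_def Ek using fE
      by (simp add: card_Diff_subset)
    then show ?thesis using cE cU lcs by simp
  qed
  have nE: "n - 1 \<in> E" using D(3) u(2) by (simp add: E_def)
  have cnt_lt: "cnt j < length cs" if "j < n - k" for j
  proof -
    have s1: "{q\<in>E. k \<le> q \<and> q < k + j} \<subseteq> {q\<in>E. k \<le> q \<and> q < k + (n - k)}"
      using that by auto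
    have "n - 1 \<in> {q\<in>E. k \<le> q \<and> q < k + (n - k)}" "n - 1 \<notin> {q\<in>E. k \<le> q \<and> q < k + j}"
      using that nE D(3) u(2) by auto
    then have "{q\<in>E. k \<le> q \<and> q < k + j} \<subset> {q\<in>E. k \<le> q \<and> q < k + (n - k)}"
      using s1 by blast
    then have "cnt j < cnt (n - k)" unfolding cnt_def using fE by (intro psubset_card_mono) simp_all
    then show ?thesis using cntn by simp
  qed
  define v where "v = map (\<lambda>j. cs ! cnt j) [0..<n-k]"
  have lv: "length v = n - k" by (simp add: v_def)
  have vnth: "v ! j = cs ! cnt j" if "j < n - k" for j using that by (simp add: v_def)
  have sv: "sorted v" unfolding sorted_iff_nth_mono lv
  proof (intro allI impI)
    fix i j assume "i \<le> j" "j < n - k"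
    then show "v!i \<le> v!j" using vnth cnt_lt cnt_mono[of i j] scs(1) lv
      by (simp add: sorted_nth_mono strict_sorted_iff)
  qed
  have setv: "set v = C"
  proof
    show "set v \<subseteq> C" using cnt_lt scs(2) by (auto simp: v_def)
  next
    show "C \<subseteq> set v"
    proof
      fix c assume "c \<in> C"
      then obtain t where t: "t < length cs" "cs ! t = c" using scs(2) by (auto simp: in_set_conv_nth)
      then obtain j where "j < n - k" "cnt j = t"
        using cnt_surj[of cnt t "n - k"] cnt0 cnt_Suc cntn by fastforce
      then show "c \<in> set v" using t by (auto simp: v_def)
    qed
  qed
  have setw: "set (u@v) = {1..r}" using setv Uu u(4) by (auto simp: C_def)
  have lw: "length (u@v) = n" using lv u(1) D(3) by simp
  let ?w = "u@v"
  have wl: "?w ! t = u!t" if "t < k" for t using that u(1) by (simp add: nth_append)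
  have wr: "?w ! t = v!(t - k)" if "k \<le> t" for t using that u(1) by (simp add: nth_append)
  have key: "lastp ?w q \<longleftrightarrow> q \<in> E" if q: "q < n" for q
  proof (cases "q < k")
    case True
    show ?thesis
    proof
      assume lq: "lastp ?w q"
      show "q \<in> E"
      proof (rule ccontr)
        assume qE: "q \<notin> E"
        have nl: "u!t \<noteq> u!q" if "q < t" "t < k" for t using lq that True lw D(3) wl
          by (auto simp: lastp_iff)
        have "u!q \<notin> set v"
        proof
          assume "u!q \<in> set v"
          then obtain j where "j < n - k" "v!j = u!q" using lv by (auto simp: in_set_conv_nth)
          then show False using lq True wr[of "k + j"] wl[of q] lw by (auto simp: lastp_iff)
        qed
        moreover have "u!q \<in> {1..r}" using u True nth_mem[of q u] by blast
        ultimately have "u!q \<in> U" using setv by (auto simp: C_def)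
        then obtain q' where q': "q' \<in> E" "q' < k" "u!q' = u!q" by (auto simp: U_def)
        then consider "q < q'" | "q' < q" using qE by (cases "q < q'") (auto simp: not_less le_eq_less_or_eq)
        then show False
        proof cases
          case 1 then show ?thesis using nl q' by auto
        next
          case 2 then show ?thesis using BE2[of q' q] q' True by auto
        qed
      qed
    next
      assume qE: "q \<in> E"
      have "u!q \<in> U" using qE True by (auto simp: U_def)
      then have nv: "u!q \<notin> set v" using setv by (auto simp: C_def)
      show "lastp ?w q" unfolding lastp_iff
      proof (intro allI impI)
        fix t assume t: "q < t \<and> t < length ?w"
        show "?w!t \<noteq> ?w!q"
        proof (cases "t < k")
          case True then show ?thesis using BE2[OF qE] t wl \<open>q < k\<close> by fastforce
        next
          case False
          have "t - k < length v" using False t lv lw by arith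
          then have "?w!t \<in> set v" using wr[of t] False by simp
          then show ?thesis using nv wl \<open>q < k\<close> by auto
        qed
      qed
    qed
  next
    case False
    define j where "j = q - k"
    have jq: "q = k + j" "j < n - k" using False q by (auto simp: j_def)
    have wq: "?w!q = cs ! cnt j" using wr[of q] vnth jq False by simp
    have dcs: "distinct cs" using scs(1) strict_sorted_iff by blast
    have eqv: "?w!t = ?w!q \<longleftrightarrow> cnt (t - k) = cnt j" if "q < t" "t < n" for t
    proof -
      have "?w!t = cs ! cnt (t - k)" using wr[of t] vnth[of "t - k"] that jq by simp
      then show ?thesis using wq dcs cnt_lt[of "t - k"] cnt_lt[of j] that jq
        by (simp add: nth_eq_iff_index_eq)
    qed
    show ?thesis
    proof
      assume lq: "lastp ?w q"
      show "q \<in> E"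
      proof (rule ccontr)
        assume qE: "q \<notin> E"
        then have "q \<noteq> n - 1" using nE by auto
        then have "Suc q < n" using q by linarith
        moreover have "cnt (Suc j) = cnt j" using cnt_Suc[of j] qE jq by simp
        ultimately show False using lq eqv[of "Suc q"] lw jq by (auto simp: lastp_iff)
      qed
    next
      assume qE: "q \<in> E"
      show "lastp ?w q" unfolding lastp_iff
      proof (intro allI impI)
        fix t assume t: "q < t \<and> t < length ?w"
        have "cnt (Suc j) \<le> cnt (t - k)" using t jq by (intro cnt_mono) auto
        moreover have "cnt (Suc j) = Suc (cnt j)" using cnt_Suc[of j] qE jq by simp
        ultimately show "?w!t \<noteq> ?w!q" using eqv[of t] t lw by auto
      qed
    qed
  qed
  have "Sset ?w = D"
  proof (rule set_eqI)
    fix p show "p \<in> Sset ?w \<longleftrightarrow> p \<in> D"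
    proof (cases p)
      case 0 then show ?thesis using D(1) by (auto simp: Sset_def)
    next
      case (Suc q)
      have "Suc q \<in> Sset ?w \<longleftrightarrow> Suc q < n \<and> q \<in> E" using key[of q] lw by (auto simp: Suc_in_Sset)
      also have "\<dots> \<longleftrightarrow> Suc q \<in> D" using D(1) by (auto simp: E_def)
      finally show ?thesis using Suc by simp
    qed
  qed
  then show ?thesis using sv setv setw lw C_def by blast
qed



lemma sinv_formula:
  assumes w: "w = u @ v" "length u = k" "sorted u" "sorted v" "set w = {1..r}" "Sset w = D" "length w = n"
  shows "int (sinv w) = (\<Sum>i<k. int (u!i) - int (Suc (card {d\<in>D. d \<le> i})))"
proof -
  have kn: "k \<le> n" using w by auto
  have wl: "w ! t = u!t" if "t < k" for t using that w(1,2) by (simp add: nth_append)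
  have wr: "w ! t = v!(t - k)" if "k \<le> t" for t using that w(1,2) by (simp add: nth_append)
  define T where "T i = {j. i < j \<and> j < n \<and> w!j < u!i \<and> lastp w j}" for i
  have "{(i, j). i < j \<and> j < length w \<and> w ! i > w ! j \<and> w ! j \<notin> set (drop (Suc j) w)}
        = Sigma {..<k} T"
  proof (rule set_eqI, clarify)
    fix i j
    show "((i, j) \<in> {(i, j). i < j \<and> j < length w \<and> w ! i > w ! j \<and> w ! j \<notin> set (drop (Suc j) w)})
       = ((i, j) \<in> Sigma {..<k} T)"
    proof (cases "i < k")
      case True then show ?thesis using wl[of i] by (auto simp: T_def lastp_def w(7))
    next
      case False
      have "\<not> (i < j \<and> j < length w \<and> w ! i > w ! j)"
      proof
        assume h: "i < j \<and> j < length w \<and> w ! i > w ! j"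
        then have "v!(i - k) \<le> v!(j - k)" using w(4) False w(1,2) by (intro sorted_nth_mono) auto
        then show False using h wr[of i] wr[of j] False by simp
      qed
      then show ?thesis using False by auto
    qed
  qed
  then have "sinv w = card (Sigma {..<k} T)" by (simp add: sinv_def)
  also have "\<dots> = (\<Sum>i<k. card (T i))" by (rule card_SigmaI) (auto simp: T_def)
  finally have s1: "sinv w = (\<Sum>i<k. card (T i))" .
  have ci: "card (T i) = (u!i - 1) - card {d\<in>D. d \<le> i} \<and> card {d\<in>D. d \<le> i} \<le> u!i - 1" if i: "i < k" for i
  proof -
    define A where "A = {j. j < n \<and> lastp w j \<and> w!j < u!i}"
    define B where "B = {j. j < i \<and> lastp w j}"
    have BA: "B \<subseteq> A"
    proof
      fix j assume "j \<in> B"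
      then have j: "j < i" "lastp w j" by (auto simp: B_def)
      then have "u!j \<le> u!i" using w(2,3) i by (simp add: sorted_nth_mono)
      moreover have "w!i \<noteq> w!j" using j i kn w(7) by (auto simp: lastp_iff)
      ultimately show "j \<in> A" using j i kn wl[of i] wl[of j] by (auto simp: A_def)
    qed
    have AT: "A = T i \<union> B"
    proof
      show "A \<subseteq> T i \<union> B"
      proof
        fix j assume "j \<in> A"
        then show "j \<in> T i \<union> B" using wl[of i] i
          by (cases "i < j"; cases "j = i") (auto simp: A_def B_def T_def)
      qed
      show "T i \<union> B \<subseteq> A" using BA by (auto simp: A_def T_def)
    qed
    have fA: "finite A" by (simp add: A_def)
    have disj: "T i \<inter> B = {}" by (auto simp: T_def B_def)
    have cA: "card A = u!i - 1"
    proof -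
      have inj: "inj_on (\<lambda>q. w!q) A"
        using bij_betw_imp_inj_on[OF lastp_bij[of w]] by (rule inj_on_subset) (auto simp: A_def w(7))
      have "(\<lambda>q. w!q) ` A = {b\<in>set w. b < u!i}"
      proof
        show "(\<lambda>q. w!q) ` A \<subseteq> {b\<in>set w. b < u!i}" by (auto simp: A_def w(7))
        show "{b\<in>set w. b < u!i} \<subseteq> (\<lambda>q. w!q) ` A"
        proof
          fix b assume b: "b \<in> {b\<in>set w. b < u!i}"
          then obtain q where "q \<in> {q. q < length w \<and> lastp w q}" "b = w!q"
            using bij_betw_imp_surj_on[OF lastp_bij[of w]] by (metis (no_types, lifting) imageE mem_Collect_eq)
          then show "b \<in> (\<lambda>q. w!q) ` A" using b by (auto simp: A_def w(7))
        qed
      qed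
      moreover have "u!i \<in> set w" using i w(1,2) by auto
      then have "{b\<in>set w. b < u!i} = {1..<u!i}" using w(5) by auto
      ultimately show ?thesis using inj card_image by fastforce
    qed
    have cB: "card B = card {d\<in>D. d \<le> i}"
    proof -
      have "{d\<in>D. d \<le> i} = Suc ` B"
      proof (rule set_eqI)
        fix d show "d \<in> {d\<in>D. d \<le> i} \<longleftrightarrow> d \<in> Suc ` B"
        proof (cases d)
          case 0 then show ?thesis using Sset_sub[of w] w(6) by auto
        next
          case (Suc j)
          have "Suc j \<in> D \<longleftrightarrow> Suc j < n \<and> lastp w j" using w(6,7) Suc_in_Sset by blast
          then show ?thesis using Suc i kn by (auto simp: B_def)
        qed
      qed
      then show ?thesis by (simp add: card_image)
    qed
    have "card A = card (T i) + card B" using AT disj fA by (simp add: card_Un_disjoint)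
    then show ?thesis using cA cB by simp
  qed
  have upos: "u!i \<ge> 1" if "i < k" for i using that w(1,2,5) nth_mem[of i u] by auto
  have "int (sinv w) = (\<Sum>i<k. int (card (T i)))" using s1 by simp
  also have "\<dots> = (\<Sum>i<k. int (u!i) - int (Suc (card {d\<in>D. d \<le> i})))"
  proof (rule sum.cong)
    fix i assume "i \<in> {..<k}"
    then show "int (card (T i)) = int (u!i) - int (Suc (card {d\<in>D. d \<le> i}))"
      using ci[of i] upos[of i] by auto
  qed simp
  finally show ?thesis .
qed



theorem mainTheorem16:
  fixes u I :: "nat list" and k r n :: nat
  assumes "length u = k" and "k \<ge> 1" and "sorted u" and "set u \<subseteq> {1..r}"
    and "is_composition I n" and "length I = r" and "n \<ge> k"
  shows "(\<forall>v1 v2. (sorted v1 \<and> set v1 \<subseteq> {1..r} \<and> packed (u @ v1) \<and> WC (u @ v1) = I)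
              \<longrightarrow> (sorted v2 \<and> set v2 \<subseteq> {1..r} \<and> packed (u @ v2) \<and> WC (u @ v2) = I)
              \<longrightarrow> v1 = v2)
       \<and> ((\<exists>v. sorted v \<and> set v \<subseteq> {1..r} \<and> packed (u @ v) \<and> WC (u @ v) = I)
           \<longleftrightarrow> (\<forall>i\<in>Des I. i \<le> k - 1 \<longrightarrow> u ! (i - 1) < u ! i))
       \<and> (\<forall>v. sorted v \<and> set v \<subseteq> {1..r} \<and> packed (u @ v) \<and> WC (u @ v) = I \<longrightarrow>
             int (sinv (u @ v)) = (\<Sum>i<k. int (u ! i) - int (ywords I ! i))
           \<and> int (sinv (u @ v)) = int (sum_list u)
                 - int (k + maj (rev (comp_of_des k (Des I \<inter> {1..k-1})))))"
proof -
  have p: "pos I" and sI: "sum_list I = n" using assms(5) by (auto simp: is_composition_def)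
  have n1: "n \<ge> 1" using assms by simp
  have r1: "r \<ge> 1" using sI n1 assms(6) by (cases I) auto
  define D where "D = Des I"
  have Dsub: "D \<subseteq> {1..<n}" using Des_sub[OF p] sI by (simp add: D_def)
  have cD: "card D = r - 1" using card_Des[OF p] assms(6) by (simp add: D_def)
  define P where "P v \<longleftrightarrow> sorted v \<and> set v \<subseteq> {1..r} \<and> packed (u @ v) \<and> WC (u @ v) = I" for v
  have ne: "u@v \<noteq> []" for v using assms(1,2) by auto
  have facts: "length (u@v) = n \<and> Sset (u@v) = D \<and> set (u@v) = {1..r}" if "P v" for v
  proof -
    have a: "length (u@v) = n" "Sset (u@v) = D" using WC_iff[OF assms(5) n1 ne] that by (auto simp: P_def D_def)
    have "packed (u@v)" using that by (simp add: P_def)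
    then obtain m where m: "set (u@v) = {1..m}" unfolding packed_def by blast
    have "card (Sset (u@v)) = m - 1" using card_Sset[OF ne] m by simp
    then have "m - 1 = r - 1" using a cD by simp
    moreover have "m \<noteq> 0" using m ne[of v] by (metis atLeastatMost_empty_iff2 not_one_le_zero set_empty)
    ultimately have "m = r" using r1 by simp
    then show ?thesis using a m by simp
  qed
  have good: "P v" if "sorted v" "set v \<subseteq> {1..r}" "set (u@v) = {1..r}" "length (u@v) = n" "Sset (u@v) = D" for v
    using WC_iff[OF assms(5) n1 ne[of v]] that by (auto simp: P_def packed_def D_def)
  have part1: "\<forall>v1 v2. P v1 \<longrightarrow> P v2 \<longrightarrow> v1 = v2"
  proof (intro allI impI)
    fix v1 v2 assume h: "P v1" "P v2"
    show "v1 = v2"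
      using uniq[of v1 v2 u] facts[OF h(1)] facts[OF h(2)] h by (auto simp: P_def)
  qed
  have part2: "(\<exists>v. P v) \<longleftrightarrow> (\<forall>i\<in>Des I. i \<le> k - 1 \<longrightarrow> u ! (i - 1) < u ! i)"
  proof
    assume "\<exists>v. P v"
    then obtain v where v: "P v" by blast
    note f = facts[OF v]
    show "\<forall>i\<in>Des I. i \<le> k - 1 \<longrightarrow> u ! (i - 1) < u ! i"
    proof (intro ballI impI)
      fix i assume i: "i \<in> Des I" "i \<le> k - 1"
      then have "i \<in> Sset (u@v)" using f by (simp add: D_def)
      moreover have "i \<ge> 1" using i Dsub by (auto simp: D_def)
      ultimately obtain q where q: "i = Suc q" "Suc q \<in> Sset (u@v)" by (cases i) auto
      then have lq: "lastp (u@v) q" by (simp add: Suc_in_Sset)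
      have ik: "i < k" using i(2) assms(2) by linarith
      have "u!q \<le> u!i" using assms(1,3) ik q by (simp add: sorted_nth_mono)
      moreover have "(u@v)!i \<noteq> (u@v)!q" using lq q ik assms(1) by (auto simp: lastp_iff)
      ultimately show "u ! (i - 1) < u ! i" using q ik assms(1) by (simp add: nth_append)
    qed
  next
    assume c: "\<forall>i\<in>Des I. i \<le> k - 1 \<longrightarrow> u ! (i - 1) < u ! i"
    obtain v where "sorted v \<and> set v \<subseteq> {1..r} \<and> set (u@v) = {1..r} \<and> length (u@v) = n \<and> Sset (u@v) = D"
      using exist[OF assms(1-4) Dsub cD assms(7) r1] c by (auto simp: D_def)
    then show "\<exists>v. P v" using good by blast
  qed
  have part3: "int (sinv (u @ v)) = (\<Sum>i<k. int (u ! i) - int (ywords I ! i))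
           \<and> int (sinv (u @ v)) = int (sum_list u)
                 - int (k + maj (rev (comp_of_des k (Des I \<inter> {1..k-1}))))" if v: "P v" for v
  proof -
    note f = facts[OF v]
    have s: "int (sinv (u@v)) = (\<Sum>i<k. int (u!i) - int (Suc (card {d\<in>D. d \<le> i})))"
      using sinv_formula[of "u@v" u v k r D n] f v assms(1,3) by (simp add: P_def)
    have y: "ywords I ! i = Suc (card {d\<in>D. d \<le> i})" if "i < k" for i
      using ywords_nth[OF p, of i] that assms(7) sI by (simp add: D_def)
    have e1: "int (sinv (u @ v)) = (\<Sum>i<k. int (u ! i) - int (ywords I ! i))"
      using s y by simp
    define X where "X = Des I \<inter> {1..k-1}"
    define K where "K = comp_of_des k X"
    have Xs: "X \<subseteq> {1..<k}" using assms(2) by (auto simp: X_def)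
    note cp = comp_of_des_props[OF Xs assms(2)]
    have "k + maj (rev K) = sum_list (ywords K)" using sum_ywords[of K] cp by (simp add: K_def)
    also have "\<dots> = (\<Sum>i<k. ywords K ! i)"
      using cp by (simp add: sum_list_sum_nth length_ywords K_def atLeast0LessThan)
    also have "\<dots> = (\<Sum>i<k. Suc (card {d\<in>D. d \<le> i}))"
    proof (rule sum.cong)
      fix i assume i: "i \<in> {..<k}"
      have "{d\<in>X. d \<le> i} = {d\<in>D. d \<le> i}" using i Dsub by (auto simp: X_def D_def)
      then show "ywords K ! i = Suc (card {d\<in>D. d \<le> i})"
        using ywords_nth[of K i] cp i by (simp add: K_def)
    qed simp
    finally have mk: "int (k + maj (rev K)) = (\<Sum>i<k. int (Suc (card {d\<in>D. d \<le> i})))" by simp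
    have su: "int (sum_list u) = (\<Sum>i<k. int (u!i))"
      using assms(1) by (simp add: sum_list_sum_nth atLeast0LessThan)
    have e2: "int (sinv (u @ v)) = int (sum_list u) - int (k + maj (rev K))"
      using s mk su by (simp add: sum_subtractf)
    show ?thesis using e1 e2 by (simp add: K_def X_def)
  qed
  show ?thesis using part1 part2 part3 unfolding P_def by blast
qed

end
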